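(* Let $\vec B$ be a binary digit vector of length $N$. If $x\in\mathbb Q\cap[0,1]$, then $F_{\vec B}(x)\in\mathbb Q$.
   Context: A binary digit vector of length (scale factor) $N\ge3$ is $\vec B=(b_0,\dots,b_{N-1})\in\{0,1\}^N$ with $2\le\|\vec B\|:=\sum_i b_i\le N-1$; its digit set is $D=\{i:b_i=1\}$. With $\phi_d(x)=(x+d)/N$ for $d\in D$, let $\mu_{\vec B}$ be the unique Borel probability measure with $\mu_{\vec B}=\frac{1}{\|\vec B\|}\sum_{d\in D}\mu_{\vec B}\circ\phi_d^{-1}$, supported on the attractor $C_{\vec B}\subset[0,1]$. The CDF is $F_{\vec B}(x)=\mu_{\vec B}([0,x])$, $x\in[0,1]$. *)

theory Defs
  imports "HOL-Probability.Probability"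
begin

definition binary_digit_vector :: "nat \<Rightarrow> nat list \<Rightarrow> bool" where
  "binary_digit_vector N b \<longleftrightarrow> N \<ge> 3 \<and> length b = N \<and> set b \<subseteq> {0, 1}
     \<and> 2 \<le> sum_list b \<and> sum_list b \<le> N - 1"

definition digit_set :: "nat list \<Rightarrow> nat set" where
  "digit_set b = {i. i < length b \<and> b ! i = 1}"

definition ifs_map :: "nat list \<Rightarrow> nat \<Rightarrow> real \<Rightarrow> real" where
  "ifs_map b d x = (x + real d) / real (length b)"

definition ss_measure :: "nat list \<Rightarrow> real measure" where
  "ss_measure b = (THE M. prob_space M \<and> sets M = sets borel \<and>
     (\<forall>A \<in> sets borel. measure M A =
        (1 / real (sum_list b)) * (\<Sum>d \<in> digit_set b. measure M (ifs_map b d -` A))))"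

definition ss_cdf :: "nat list \<Rightarrow> real \<Rightarrow> real" where
  "ss_cdf b x = measure (ss_measure b) {0..x}"

end

theory Submission
  imports Defs
begin

definition is_ss :: "nat list \<Rightarrow> real measure \<Rightarrow> bool" where
  "is_ss b M \<longleftrightarrow> prob_space M \<and> sets M = sets borel \<and>
     (\<forall>A \<in> sets borel. measure M A =
        (1 / real (sum_list b)) * (\<Sum>d \<in> digit_set b. measure M (ifs_map b d -` A)))"

lemma card_digit_set:
  assumes "set b \<subseteq> {0,1}"
  shows "card (digit_set b) = sum_list b"
proof -
  have "sum_list b = (\<Sum>i<length b. b!i)"
    by (simp add: sum_list_sum_nth atLeast0LessThan)
  also have "\<dots> = (\<Sum>i<length b. if b!i = 1 then 1 else 0)"
  proof (rule sum.cong)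
    fix i assume "i \<in> {..<length b}"
    then have "b!i \<in> {0,1}" using assms nth_mem by fastforce
    then show "b!i = (if b!i = 1 then 1 else 0)" by auto
  qed simp
  also have "\<dots> = card (digit_set b)"
    by (simp add: sum.If_cases digit_set_def) (rule arg_cong[where f=card]; auto)
  finally show ?thesis by simp
qed

lemma digit_set_sub: "digit_set b \<subseteq> {..<length b}"
  unfolding digit_set_def by auto

lemma measurable_ifs[measurable]: "ifs_map b d \<in> borel_measurable borel"
  unfolding ifs_map_def by measurable

context
  fixes b :: "nat list"
  assumes bdv: "binary_digit_vector (length b) b"
begin

definition "clampd d = real (min d (length b - 1))"
definition "gmap X = (\<Sum>k. clampd (X !! k) / real (length b) ^ Suc k)"

lemma Nge3: "length b \<ge> 3" using bdv by (simp add: binary_digit_vector_def)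

lemma D_fin: "finite (digit_set b)" unfolding digit_set_def by auto
lemma D_card: "card (digit_set b) = sum_list b"
  using bdv card_digit_set by (simp add: binary_digit_vector_def)
lemma n_ge2: "sum_list b \<ge> 2" using bdv by (simp add: binary_digit_vector_def)
lemma D_ne: "digit_set b \<noteq> {}"
proof
  assume "digit_set b = {}" then have "sum_list b = 0" using D_card by simp
  with n_ge2 show False by simp
qed

lemma summable_g: "summable (\<lambda>k. clampd (X !! k) / real (length b) ^ Suc k)"
proof (rule summable_comparison_test')
  show "summable (\<lambda>k. (1 / real (length b)) ^ k)" 
  proof (intro summable_geometric)
    have "real (length b) > 1" using Nge3 by simp
    then show "norm (1 / real (length b)) < 1" by (simp add: divide_less_eq)
  qed
  fix k
  have "clampd (X !! k) \<le> real (length b)" unfolding clampd_def by auto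
  then have "clampd (X !! k) / real (length b) ^ Suc k \<le> real (length b) / real (length b) ^ Suc k"
    by (intro divide_right_mono) auto
  also have "\<dots> = (1 / real (length b)) ^ k" using Nge3 by (cases "b = []") (auto simp: power_divide)
  finally show "norm (clampd (X !! k) / real (length b) ^ Suc k) \<le> (1 / real (length b)) ^ k"
    by (simp add: clampd_def)
qed

lemma gmap_Stream:
  assumes "x \<in> digit_set b"
  shows "gmap (x ## X) = ifs_map b x (gmap X)"
proof -
  have xl: "x \<le> length b - 1" using assms digit_set_sub by fastforce
  have "gmap (x ## X) = clampd x / real (length b) + (\<Sum>k. clampd (X !! k) / real (length b) ^ Suc (Suc k))"
    unfolding gmap_def using suminf_split_head[OF summable_g[of "x ## X"]] by simp
  also have "(\<Sum>k. clampd (X !! k) / real (length b) ^ Suc (Suc k)) = gmap X / real (length b)"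
    unfolding gmap_def using suminf_divide[OF summable_g[of X], of "real (length b)"]
    by (simp add: field_simps)
  finally show ?thesis using xl by (simp add: ifs_map_def clampd_def add_divide_distrib min_def)
qed

lemma gmap_meas: "gmap \<in> borel_measurable (stream_space (measure_pmf (pmf_of_set (digit_set b))))"
proof -
  have c: "clampd \<in> borel_measurable (measure_pmf (pmf_of_set (digit_set b)))" by simp
  show ?thesis unfolding gmap_def
    by (intro borel_measurable_suminf borel_measurable_divide borel_measurable_const
        measurable_compose[OF measurable_snth c])
qed

lemma exists_ss: "is_ss b (distr (stream_space (measure_pmf (pmf_of_set (digit_set b)))) borel gmap)"
proof -
  define P where "P = measure_pmf (pmf_of_set (digit_set b))"
  define S where "S = stream_space P"
  define M where "M = distr S borel gmap"
  have pP: "prob_space P" unfolding P_def by (rule prob_space_measure_pmf)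
  interpret S: prob_space S unfolding S_def by (rule prob_space.prob_space_stream_space[OF pP])
  have gm: "gmap \<in> borel_measurable S" using gmap_meas unfolding S_def P_def .
  interpret M: prob_space M unfolding M_def by (rule S.prob_space_distr[OF gm])
  have sM: "sets M = sets borel" unfolding M_def by simp
  have "measure M A = (1 / real (sum_list b)) * (\<Sum>d \<in> digit_set b. measure M (ifs_map b d -` A))"
    if A: "A \<in> sets borel" for A
  proof -
    have "ennreal (measure M A) = emeasure M A" by (simp add: M.emeasure_eq_measure)
    also have "\<dots> = (\<integral>\<^sup>+y. indicator A y \<partial>M)" using A sM by simp
    also have "\<dots> = (\<integral>\<^sup>+X. indicator A (gmap X) \<partial>S)"
      unfolding M_def using A gm by (subst nn_integral_distr) auto
    also have "\<dots> = (\<integral>\<^sup>+x. (\<integral>\<^sup>+X. indicator A (gmap (x ## X)) \<partial>S) \<partial>P)"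
      unfolding S_def using A gm unfolding S_def
      by (subst prob_space.nn_integral_stream_space[OF pP]) auto
    also have "\<dots> = (\<Sum>x\<in>digit_set b. (\<integral>\<^sup>+X. indicator A (gmap (x ## X)) \<partial>S)) / card (digit_set b)"
      unfolding P_def by (rule nn_integral_pmf_of_set[OF D_ne D_fin])
    also have "(\<Sum>x\<in>digit_set b. (\<integral>\<^sup>+X. indicator A (gmap (x ## X)) \<partial>S))
       = (\<Sum>x\<in>digit_set b. ennreal (measure M (ifs_map b x -` A)))"
    proof (rule sum.cong)
      fix x assume x: "x \<in> digit_set b"
      have "(\<integral>\<^sup>+X. indicator A (gmap (x ## X)) \<partial>S) = (\<integral>\<^sup>+X. indicator (ifs_map b x -` A) (gmap X) \<partial>S)"
        using gmap_Stream[OF x] by (simp add: indicator_def)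
      also have "\<dots> = (\<integral>\<^sup>+y. indicator (ifs_map b x -` A) y \<partial>M)"
        unfolding M_def using A gm by (subst nn_integral_distr) auto
      also have "\<dots> = emeasure M (ifs_map b x -` A)"
      proof -
        have "ifs_map b x -` A \<in> sets borel" using measurable_sets_borel[OF measurable_ifs A] by simp
        then show ?thesis by (simp add: sM)
      qed
      finally show "(\<integral>\<^sup>+X. indicator A (gmap (x ## X)) \<partial>S) = ennreal (measure M (ifs_map b x -` A))"
        by (simp add: M.emeasure_eq_measure)
    qed simp
    also have "\<dots> = ennreal (\<Sum>x\<in>digit_set b. measure M (ifs_map b x -` A))"
      by (simp add: sum_ennreal)
    also have "\<dots> / card (digit_set b) = ennreal ((\<Sum>x\<in>digit_set b. measure M (ifs_map b x -` A)) / card (digit_set b))"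
      using D_ne D_fin by (subst ennreal_of_nat_eq_real_of_nat) (simp add: divide_ennreal sum_nonneg card_gt_0_iff)
    finally have "measure M A = (\<Sum>x\<in>digit_set b. measure M (ifs_map b x -` A)) / card (digit_set b)"
      by (simp add: sum_nonneg divide_nonneg_nonneg)
    then show ?thesis by (simp add: D_card)
  qed
  then have "is_ss b M" unfolding is_ss_def using M.prob_space_axioms sM by auto
  then show ?thesis by (simp add: M_def S_def P_def)
qed

end

lemma cancel_aux: "(c::real) \<noteq> 0 \<Longrightarrow> c * ((1/c) * X) = X" by simp

definition "jj b x = nat \<lfloor>real (length b) * x\<rfloor>"
definition "Tm b x = real (length b) * x - real (jj b x)"
definition "aa b x = real (card {d\<in>digit_set b. d < jj b x}) / real (sum_list b)"
definition "cc b x = (if jj b x \<in> digit_set b then 1 / real (sum_list b) else 0)"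

context
  fixes b :: "nat list" and M :: "real measure"
  assumes bdv: "binary_digit_vector (length b) b"
    and ss: "is_ss b M"
begin

interpretation real_distribution M
  using ss unfolding is_ss_def real_distribution_def real_distribution_axioms_def by auto

lemma rd: "real_distribution M"
  using ss unfolding is_ss_def real_distribution_def real_distribution_axioms_def by auto

abbreviation "NN \<equiv> real (length b)"
abbreviation "nn \<equiv> real (sum_list b)"
abbreviation "DD \<equiv> digit_set b"

lemma NN_gt: "NN \<ge> 3" using Nge3[OF bdv] by simp
lemma NN_pos: "NN > 0" using NN_gt by linarith
lemma nn_ge: "nn \<ge> 2" using n_ge2[OF bdv] by simp
lemma nn_pos: "nn > 0" using nn_ge by linarith
lemma nn_ne: "nn \<noteq> 0" using nn_pos by linarith
lemma card_DD: "real (card DD) = nn" using D_card[OF bdv] by simp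

lemma cdf_eq: "cdf M y = (1 / nn) * (\<Sum>d\<in>DD. cdf M (NN * y - real d))"
proof -
  have "{..y} \<in> sets borel" by simp
  then have "measure M {..y} = (1 / nn) * (\<Sum>d\<in>DD. measure M (ifs_map b d -` {..y}))"
    using ss unfolding is_ss_def by blast
  moreover have "ifs_map b d -` {..y} = {..NN * y - real d}" for d
    using NN_pos by (auto simp: ifs_map_def pos_divide_le_eq pos_le_divide_eq algebra_simps)
  ultimately show ?thesis by (simp add: cdf_def2)
qed

lemma sum_const_DD: "(\<Sum>d\<in>DD. c) = nn * c"
  using card_DD by simp

lemma cdf_neg_step: "y \<le> 0 \<Longrightarrow> cdf M y \<le> cdf M (NN * y)"
proof -
  assume y: "y \<le> 0"
  have "(\<Sum>d\<in>DD. cdf M (NN * y - real d)) \<le> (\<Sum>d\<in>DD. cdf M (NN * y))"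
    by (intro sum_mono cdf_nondecreasing) auto
  also have "\<dots> = nn * cdf M (NN * y)" by (rule sum_const_DD)
  finally show ?thesis using nn_ge by (subst cdf_eq) (simp add: field_simps)
qed

lemma cdf_neg_iter: "y \<le> 0 \<Longrightarrow> cdf M y \<le> cdf M (NN ^ k * y)"
proof (induction k arbitrary: y)
  case (Suc k)
  have "NN * y \<le> 0" using Suc.prems NN_gt by (simp add: mult_nonneg_nonpos)
  have "cdf M y \<le> cdf M (NN * y)" by (rule cdf_neg_step[OF Suc.prems])
  also have "\<dots> \<le> cdf M (NN ^ k * (NN * y))" by (rule Suc.IH[OF \<open>NN * y \<le> 0\<close>])
  finally show ?case by (simp add: ac_simps)
qed simp

lemma cdf_neg: assumes y: "y < 0" shows "cdf M y = 0"
proof -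
  have "cdf M y \<le> e" if e: "e > 0" for e
  proof -
    have "eventually (\<lambda>t. cdf M t < e) at_bot"
      using cdf_lim_at_bot e by (rule order_tendstoD)
    then obtain T where T: "\<And>t. t \<le> T \<Longrightarrow> cdf M t < e"
      unfolding eventually_at_bot_linorder by blast
    obtain k where k: "T / y < NN ^ k" using real_arch_pow[of NN "T / y"] NN_gt by auto
    have "NN ^ k * y \<le> T" using k y by (simp add: divide_less_eq mult.commute)
    then have "cdf M (NN ^ k * y) < e" by (rule T)
    then show ?thesis using cdf_neg_iter[of y k] y by simp
  qed
  then have "cdf M y \<le> 0" by (meson dense not_le)
  then show ?thesis using cdf_nonneg[of y] by simp
qed


lemma cdf_top_step: assumes z: "z \<ge> 0" shows "cdf M (1 + NN * z) \<le> cdf M (1 + z)"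
proof -
  have "(\<Sum>d\<in>DD. cdf M (1 + NN * z)) \<le> (\<Sum>d\<in>DD. cdf M (NN * (1 + z) - real d))"
  proof (intro sum_mono cdf_nondecreasing)
    fix d assume "d \<in> DD"
    then have "d < length b" using digit_set_sub by fastforce
    then have "real d \<le> NN - 1" by linarith
    then show "1 + NN * z \<le> NN * (1 + z) - real d" by (simp add: algebra_simps)
  qed
  also have "\<dots> = nn * ((1 / nn) * (\<Sum>d\<in>DD. cdf M (NN * (1 + z) - real d)))" by (rule cancel_aux[OF nn_ne, symmetric])
  also have "\<dots> = nn * cdf M (1 + z)" using cdf_eq[of "1 + z"] by simp
  finally have "nn * cdf M (1 + NN * z) \<le> nn * cdf M (1 + z)" by (simp only: sum_const_DD)
  then show ?thesis using nn_pos by (simp add: mult_le_cancel_left_pos)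
qed

lemma cdf_top_iter: "z \<ge> 0 \<Longrightarrow> cdf M (1 + NN ^ k * z) \<le> cdf M (1 + z)"
proof (induction k arbitrary: z)
  case (Suc k)
  have "NN * z \<ge> 0" using Suc.prems NN_gt by simp
  have "cdf M (1 + NN ^ k * (NN * z)) \<le> cdf M (1 + NN * z)" by (rule Suc.IH[OF \<open>NN * z \<ge> 0\<close>])
  also have "\<dots> \<le> cdf M (1 + z)" by (rule cdf_top_step[OF Suc.prems])
  finally show ?case by (simp add: ac_simps)
qed simp

lemma cdf_gt1: assumes y: "y > 1" shows "cdf M y = 1"
proof -
  define z where "z = y - 1"
  have z: "z > 0" and yz: "y = 1 + z" using y by (auto simp: z_def)
  have "cdf M y \<ge> 1 - e" if e: "e > 0" for e
  proof -
    have "eventually (\<lambda>t. cdf M t > 1 - e) at_top"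
      using cdf_lim_at_top_prob e by (intro order_tendstoD(1)) auto
    then obtain T where T: "\<And>t. t \<ge> T \<Longrightarrow> cdf M t > 1 - e"
      unfolding eventually_at_top_linorder by blast
    obtain k where k: "(T - 1) / z < NN ^ k" using real_arch_pow[of NN "(T - 1) / z"] NN_gt by auto
    have "T - 1 \<le> NN ^ k * z" using k z by (simp add: divide_less_eq mult.commute)
    then have "cdf M (1 + NN ^ k * z) > 1 - e" by (intro T) simp
    then show ?thesis using cdf_top_iter[of z k] z yz by simp
  qed
  then have "cdf M y \<ge> 1"
    by (metis diff_gt_0_iff_gt diff_le_eq le_add_diff_inverse2 linorder_not_le
        field_le_epsilon add.commute)
  then show ?thesis using cdf_bounded_prob[of y] by simp
qed

lemma cdf_1: "cdf M 1 = 1"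
proof -
  have "(\<Sum>d\<in>DD. cdf M (NN * 1 - real d)) = (\<Sum>d\<in>DD. 1 - (if d = length b - 1 then 1 - cdf M 1 else 0))"
  proof (rule sum.cong)
    fix d assume "d \<in> DD"
    then have "d < length b" using digit_set_sub by fastforce
    show "cdf M (NN * 1 - real d) = 1 - (if d = length b - 1 then 1 - cdf M 1 else 0)"
    proof (cases "d = length b - 1")
      case True then show ?thesis using NN_gt by (simp add: of_nat_diff)
    next
      case False
      then have "real d \<le> NN - 2" using \<open>d < length b\<close> by linarith
      then show ?thesis using False by (simp add: cdf_gt1)
    qed
  qed simp
  also have "\<dots> = nn - (if length b - 1 \<in> DD then 1 - cdf M 1 else 0)"
    using D_fin[OF bdv] sum_const_DD[of 1] by (simp add: sum_subtractf sum.delta)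
  finally have "cdf M 1 = (1 / nn) * (nn - (if length b - 1 \<in> DD then 1 - cdf M 1 else 0))"
    using cdf_eq[of 1] by simp
  then have "nn * cdf M 1 = nn * ((1 / nn) * (nn - (if length b - 1 \<in> DD then 1 - cdf M 1 else 0)))"
    by simp
  also have "\<dots> = nn - (if length b - 1 \<in> DD then 1 - cdf M 1 else 0)" by (rule cancel_aux[OF nn_ne])
  finally have "nn * cdf M 1 \<ge> nn - (1 - cdf M 1)"
    using cdf_bounded_prob[of 1] by (auto split: if_splits)
  then have "(nn - 1) * cdf M 1 \<ge> nn - 1" by (simp add: algebra_simps)
  then have "cdf M 1 \<ge> 1" using nn_ge by simp
  then show ?thesis using cdf_bounded_prob[of 1] by simp
qed

lemma cdf_ge1: "y \<ge> 1 \<Longrightarrow> cdf M y = 1"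
  using cdf_1 cdf_gt1 by (cases "y = 1") auto

end

lemma jj_facts:
  assumes "binary_digit_vector (length b) b" "0 \<le> x" "x < 1"
  shows "real (jj b x) \<le> real (length b) * x" "real (length b) * x < real (jj b x) + 1"
    "jj b x < length b" "0 \<le> Tm b x" "Tm b x < 1"
proof -
  have nx: "real (length b) * x \<ge> 0" using assms by simp
  then have fl: "real (jj b x) = real_of_int \<lfloor>real (length b) * x\<rfloor>" unfolding jj_def by simp
  show 1: "real (jj b x) \<le> real (length b) * x" using fl by simp
  show 2: "real (length b) * x < real (jj b x) + 1" using fl by linarith
  have "real (length b) > 0" using Nge3[OF assms(1)] by linarith
  then have "real (length b) * x < real (length b)" using assms mult_strict_left_mono[of x 1 "real (length b)"] by simp
  then show "jj b x < length b" using 1 by linarith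
  show "0 \<le> Tm b x" "Tm b x < 1" using 1 2 unfolding Tm_def by auto
qed


context
  fixes b :: "nat list" and M :: "real measure"
  assumes bdv: "binary_digit_vector (length b) b"
    and ss: "is_ss b M"
begin

lemma cdf_rec:
  assumes x: "0 \<le> x" "x < 1"
  shows "cdf M x = aa b x + cc b x * cdf M (Tm b x)"
proof -
  note jf = jj_facts[OF bdv x]
  define j where "j = jj b x"
  have "(\<Sum>d\<in>(DD b). cdf M ((NN b) * x - real d)) =
     (\<Sum>d\<in>(DD b). (if d < j then 1 else 0) + (if d = j then cdf M (Tm b x) else 0))"
  proof (rule sum.cong)
    fix d assume "d \<in> (DD b)"
    show "cdf M ((NN b) * x - real d) = (if d < j then 1 else 0) + (if d = j then cdf M (Tm b x) else 0)"
    proof (cases "d < j")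
      case True
      then have "real d + 1 \<le> real j" by linarith
      then have "(NN b) * x - real d \<ge> 1" using jf(1) unfolding j_def by linarith
      then show ?thesis using True cdf_ge1[OF bdv ss] by simp
    next
      case False
      show ?thesis
      proof (cases "d = j")
        case True then show ?thesis by (simp add: Tm_def j_def)
      next
        case False2: False
        then have "real d \<ge> real j + 1" using False by linarith
        then have "(NN b) * x - real d < 0" using jf(2) unfolding j_def by linarith
        then show ?thesis using False False2 cdf_neg[OF bdv ss] by simp
      qed
    qed
  qed simp
  also have "\<dots> = real (card {d\<in>(DD b). d < j}) + (if j \<in> (DD b) then cdf M (Tm b x) else 0)"
    using D_fin[OF bdv] by (simp add: sum.distrib sum.inter_filter[symmetric] sum.delta)
  finally have "cdf M x = (1 / (nn b)) * (real (card {d\<in>(DD b). d < j}) + (if j \<in> (DD b) then cdf M (Tm b x) else 0))"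
    using cdf_eq[OF bdv ss, of x] by simp
  then show ?thesis unfolding aa_def cc_def j_def by (auto simp: add_divide_distrib)
qed

lemma Tm_iter_range:
  assumes x: "0 \<le> x" "x < 1"
  shows "0 \<le> (Tm b ^^ i) x \<and> (Tm b ^^ i) x < 1"
proof (induction i)
  case (Suc i) then show ?case using jj_facts[OF bdv, of "(Tm b ^^ i) x"] by simp
qed (use x in simp)

lemma aa_rat: "aa b y \<in> \<rat>" unfolding aa_def by simp
lemma cc_rat: "cc b y \<in> \<rat>" unfolding cc_def by simp
lemma cc_bounds: "0 \<le> cc b y" "cc b y \<le> 1 / (nn b)" unfolding cc_def by auto

lemma iter_affine:
  assumes x: "0 \<le> x" "x < 1"
  shows "\<exists>A C. A \<in> \<rat> \<and> C \<in> \<rat> \<and> 0 \<le> C \<and> C \<le> (1 / (nn b)) ^ k \<and>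
     cdf M ((Tm b ^^ i) x) = A + C * cdf M ((Tm b ^^ (i + k)) x)"
proof (induction k)
  case 0
  show ?case by (rule exI[of _ 0], rule exI[of _ 1]) simp
next
  case (Suc k)
  then obtain A C where AC: "A \<in> \<rat>" "C \<in> \<rat>" "0 \<le> C" "C \<le> (1 / (nn b)) ^ k"
    "cdf M ((Tm b ^^ i) x) = A + C * cdf M ((Tm b ^^ (i + k)) x)" by blast
  define y where "y = (Tm b ^^ (i + k)) x"
  have y: "0 \<le> y" "y < 1" using Tm_iter_range[OF x] unfolding y_def by auto
  have "cdf M ((Tm b ^^ i) x) = (A + C * aa b y) + (C * cc b y) * cdf M ((Tm b ^^ (i + Suc k)) x)"
    using AC(5) cdf_rec[OF y] unfolding y_def by (simp add: algebra_simps)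
  moreover have "C * cc b y \<le> (1 / (nn b)) ^ Suc k"
  proof -
    have "C * cc b y \<le> (1 / (nn b)) ^ k * (1 / (nn b))"
      using AC(3,4) cc_bounds[of y] by (intro mult_mono) auto
    then show ?thesis by (simp add: ac_simps)
  qed
  moreover have "A + C * aa b y \<in> \<rat>" "C * cc b y \<in> \<rat>" using AC aa_rat cc_rat by auto
  moreover have "0 \<le> C * cc b y" using AC(3) cc_bounds by simp
  ultimately show ?case by blast
qed

lemma cdf_rat_lt1:
  assumes x: "x \<in> \<rat>" "0 \<le> x" "x < 1"
  shows "cdf M x \<in> \<rat>"
proof -
  obtain p q :: int where q: "q > 0" and xpq: "x = of_int p / of_int q"
    using Rats_cases'[OF x(1)] by metis
  have form: "\<exists>r::int. (Tm b ^^ i) x = of_int r / of_int q" for i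
  proof (induction i)
    case 0 then show ?case using xpq by auto
  next
    case (Suc i)
    then obtain r where r: "(Tm b ^^ i) x = of_int r / of_int q" by blast
    have "Tm b ((Tm b ^^ i) x) = of_int (int (length b) * r - q * int (jj b ((Tm b ^^ i) x))) / of_int q"
      unfolding Tm_def r using q by (simp add: field_simps)
    then show ?case by (intro exI[of _ "int (length b) * r - q * int (jj b ((Tm b ^^ i) x))"]) simp
  qed
  define S where "S = (\<lambda>r::int. real_of_int r / real_of_int q) ` {0..<q}"
  have img: "(\<lambda>i. (Tm b ^^ i) x) ` {0..nat q} \<subseteq> S"
  proof
    fix z assume "z \<in> (\<lambda>i. (Tm b ^^ i) x) ` {0..nat q}"
    then obtain i where zi: "z = (Tm b ^^ i) x" by blast
    obtain r where r: "z = of_int r / of_int q" using form zi by blast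
    have "0 \<le> z" "z < 1" using Tm_iter_range[OF x(2,3)] zi by auto
    then have "0 \<le> r" "r < q" using q unfolding r by (auto simp: divide_less_eq le_divide_eq)
    then show "z \<in> S" unfolding S_def r by auto
  qed
  have "\<not> inj_on (\<lambda>i. (Tm b ^^ i) x) {0..nat q}"
  proof
    assume "inj_on (\<lambda>i. (Tm b ^^ i) x) {0..nat q}"
    then have "card {0..nat q} \<le> card S"
      using card_inj_on_le[OF _ img] unfolding S_def by auto
    also have "card S \<le> card {0..<q}" unfolding S_def by (rule card_image_le) simp
    finally show False using q by simp
  qed
  then obtain i1 i2 where i12: "i1 \<noteq> i2" "(Tm b ^^ i1) x = (Tm b ^^ i2) x"
    unfolding inj_on_def by blast
  obtain i j where ij: "i < j" "(Tm b ^^ i) x = (Tm b ^^ j) x"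
    using i12 by (metis linorder_neqE_nat)
  obtain A C where AC: "A \<in> \<rat>" "C \<in> \<rat>" "0 \<le> C" "C \<le> (1 / (nn b)) ^ (j - i)"
    "cdf M ((Tm b ^^ i) x) = A + C * cdf M ((Tm b ^^ (i + (j - i))) x)"
    using iter_affine[OF x(2,3), of "j - i" i] by blast
  have n2: "nn b \<ge> 2" by (rule nn_ge[OF bdv ss])
  have "(1 / (nn b)) ^ (j - i) \<le> (1 / (nn b)) ^ 1"
    by (rule power_decreasing) (use n2 ij in auto)
  then have "C \<le> 1 / nn b" using AC(4) by simp
  also have "1 / nn b < 1" using n2 by simp
  finally have "C < 1" .
  have "cdf M ((Tm b ^^ i) x) = A + C * cdf M ((Tm b ^^ i) x)" using AC(5) ij by simp
  then have "cdf M ((Tm b ^^ i) x) = A / (1 - C)" using \<open>C < 1\<close> by (simp add: field_simps)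
  then have ri: "cdf M ((Tm b ^^ i) x) \<in> \<rat>" using AC(1,2) by simp
  obtain A' C' where AC': "A' \<in> \<rat>" "C' \<in> \<rat>"
    "cdf M ((Tm b ^^ 0) x) = A' + C' * cdf M ((Tm b ^^ (0 + i)) x)"
    using iter_affine[OF x(2,3), of i 0] by blast
  then show ?thesis using ri by simp
qed

end


context
  fixes b :: "nat list"
  assumes bdv: "binary_digit_vector (length b) b"
begin

lemma cdf_01: "is_ss b M \<Longrightarrow> 0 \<le> cdf M x \<and> cdf M x \<le> 1"
  using real_distribution.cdf_bounded_prob[OF rd[OF bdv]] by (simp add: cdf_def2)

lemma diff_bound:
  assumes s1: "is_ss b M1" and s2: "is_ss b M2"
  shows "0 \<le> x \<Longrightarrow> x < 1 \<Longrightarrow> \<bar>cdf M1 x - cdf M2 x\<bar> \<le> (1 / nn b) ^ k"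
proof (induction k arbitrary: x)
  case 0
  then show ?case using cdf_01[OF s1, of x] cdf_01[OF s2, of x] by auto
next
  case (Suc k)
  have "cdf M1 x - cdf M2 x = cc b x * (cdf M1 (Tm b x) - cdf M2 (Tm b x))"
    using cdf_rec[OF bdv s1 Suc.prems] cdf_rec[OF bdv s2 Suc.prems] by (simp add: algebra_simps)
  then have "\<bar>cdf M1 x - cdf M2 x\<bar> = cc b x * \<bar>cdf M1 (Tm b x) - cdf M2 (Tm b x)\<bar>"
    using cc_bounds[OF bdv s1, of x] by (simp add: abs_mult)
  also have "\<dots> \<le> (1 / nn b) * (1 / nn b) ^ k"
    using cc_bounds[OF bdv s1, of x] Suc.IH[of "Tm b x"] jj_facts[OF bdv Suc.prems]
    by (intro mult_mono) auto
  finally show ?case by simp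
qed

lemma uniq:
  assumes s1: "is_ss b M1" and s2: "is_ss b M2"
  shows "M1 = M2"
proof (rule cdf_unique[OF rd[OF bdv s1] rd[OF bdv s2]], rule ext)
  fix x
  show "cdf M1 x = cdf M2 x"
  proof (cases "x < 0")
    case True then show ?thesis using cdf_neg[OF bdv s1] cdf_neg[OF bdv s2] by simp
  next
    case False
    show ?thesis
    proof (cases "x \<ge> 1")
      case True then show ?thesis using cdf_ge1[OF bdv s1] cdf_ge1[OF bdv s2] by simp
    next
      case False2: False
      have "\<bar>cdf M1 x - cdf M2 x\<bar> \<le> 0"
      proof (rule ccontr)
        assume "\<not> ?thesis"
        then have pos: "\<bar>cdf M1 x - cdf M2 x\<bar> > 0" by simp
        have n2: "nn b \<ge> 2" by (rule nn_ge[OF bdv s1])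
        obtain k where "(1 / nn b) ^ k < \<bar>cdf M1 x - cdf M2 x\<bar>"
          using real_arch_pow_inv[OF pos, of "1 / nn b"] n2 by auto
        moreover have "\<bar>cdf M1 x - cdf M2 x\<bar> \<le> (1 / nn b) ^ k"
          using diff_bound[OF s1 s2, of x k] False False2 by simp
        ultimately show False by simp
      qed
      then show ?thesis by simp
    qed
  qed
qed

lemma ss_is: "is_ss b (ss_measure b)"
proof -
  define M0 where "M0 = distr (stream_space (measure_pmf (pmf_of_set (digit_set b)))) borel (gmap b)"
  have e: "is_ss b M0" unfolding M0_def by (rule exists_ss[OF bdv])
  have ex1: "\<exists>!M. is_ss b M" using e uniq by blast
  have "ss_measure b = (THE M. is_ss b M)" by (simp add: ss_measure_def is_ss_def)
  also have "\<dots> = M0" using ex1 e by (rule the1_equality)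
  finally show ?thesis using e by simp
qed

end

theorem lemma2p6:
  fixes N :: nat and b :: "nat list" and x :: real
  assumes "binary_digit_vector N b"
    and "x \<in> \<rat>" and "0 \<le> x" and "x \<le> 1"
  shows "ss_cdf b x \<in> \<rat>"
proof -
  have N: "N = length b" using assms(1) by (simp add: binary_digit_vector_def)
  have bdv: "binary_digit_vector (length b) b" using assms(1) N by simp
  define M where "M = ss_measure b"
  have ss: "is_ss b M" unfolding M_def by (rule ss_is[OF bdv])
  interpret real_distribution M by (rule rd[OF bdv ss])
  have ev: "eventually (\<lambda>y. cdf M y = 0) (at_left (0::real))"
  proof -
    have "eventually (\<lambda>y. y \<in> {-1<..<0}) (at_left (0::real))"
      by (rule eventually_at_left_real) simp
    then show ?thesis by (rule eventually_mono) (use cdf_neg[OF bdv ss] in auto)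
  qed
  have "(cdf M \<longlongrightarrow> 0) (at_left (0::real))"
    by (rule tendsto_eventually) (rule ev)
  moreover have "(cdf M \<longlongrightarrow> measure M {..<0}) (at_left (0::real))" by (rule cdf_at_left)
  ultimately have m0: "measure M {..<0} = 0"
    using tendsto_unique[OF trivial_limit_at_left_real] by metis
  have "{0..x} = {..x} - {..<0}" by auto
  then have "measure M {0..x} = measure M {..x} - measure M {..<0}"
    using assms(3) by (simp add: finite_measure_Diff subset_eq)
  then have eq: "ss_cdf b x = cdf M x" using m0 unfolding ss_cdf_def M_def[symmetric] by (simp add: cdf_def2)
  show ?thesis
  proof (cases "x = 1")
    case True then show ?thesis using eq cdf_ge1[OF bdv ss] by simp
  next
    case False
    then show ?thesis using eq cdf_rat_lt1[OF bdv ss assms(2,3)] assms(4) by simp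
  qed
qed

end
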